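(* Let $\mathbb X,\mathbb Y,\mathbb X^\sharp,\mathbb Y^\sharp$ be sets, $c:\mathbb X\times\mathbb X^\sharp\to\overline{\mathbb R}$, $d:\mathbb Y\times\mathbb Y^\sharp\to\overline{\mathbb R}$ couplings, and $K:\mathbb X\times\mathbb Y\to\overline{\mathbb R}$, $f:\mathbb X\to\overline{\mathbb R}$, $g:\mathbb Y\to\overline{\mathbb R}$. For $(x^\sharp,y)\in\mathbb X^\sharp\times\mathbb Y$ define $$K_{x^\sharp}(y)=-\big(K(\cdot,y)\big)^{c}(x^\sharp)=\inf_{x\in\mathbb X}\big((-c(x,x^\sharp))\mathbin{\overset{\cdot}{+}} K(x,y)\big).$$ Suppose that for every $x^\sharp\in\mathbb X^\sharp$, $$\sup_{y\in\mathbb Y}\big((-K_{x^\sharp}(y))\mathbin{\underset{\cdot}{+}}(-g(y))\big)=\inf_{y^\sharp\in\mathbb Y^\sharp}\big(K_{x^\sharp}^{d}(y^\sharp)\mathbin{\overset{\cdot}{+}} g^{-d}(y^\sharp)\big).$$ Then: if $f(x)=\inf_{y\in\mathbb Y}\big(K(x,y)\mathbin{\overset{\cdot}{+}} g(y)\big)$ for all $x\in\mathbb X$, it follows that $f^{c}(x^\sharp)=\inf_{y^\sharp\in\mathbb Y^\sharp}\big(K^{c\mathbin{\underset{\cdot}{+}} d}(x^\sharp,y^\sharp)\mathbin{\overset{\cdot}{+}} g^{-d}(y^\sharp)\big)$ for all $x^\sharp\in\mathbb X^\sharp$.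
   Context: $\overline{\mathbb R}=[-\infty,+\infty]$. The Moreau lower addition $\mathbin{\underset{\cdot}{+}}$ is usual addition extended by $(+\infty)\mathbin{\underset{\cdot}{+}}(-\infty)=(-\infty)\mathbin{\underset{\cdot}{+}}(+\infty)=-\infty$; the Moreau upper addition $\mathbin{\overset{\cdot}{+}}$ is usual addition extended by $(+\infty)\mathbin{\overset{\cdot}{+}}(-\infty)=(-\infty)\mathbin{\overset{\cdot}{+}}(+\infty)=+\infty$. For $h:\mathbb X\to\overline{\mathbb R}$, $h^{c}(x^\sharp)=\sup_{x}\big(c(x,x^\sharp)\mathbin{\underset{\cdot}{+}}(-h(x))\big)$. For $k:\mathbb Y\to\overline{\mathbb R}$, $k^{d}(y^\sharp)=\sup_{y}\big(d(y,y^\sharp)\mathbin{\underset{\cdot}{+}}(-k(y))\big)$ and $k^{-d}(y^\sharp)=\sup_{y}\big((-d(y,y^\sharp))\mathbin{\underset{\cdot}{+}}(-k(y))\big)$. $K^{c\mathbin{\underset{\cdot}{+}} d}(x^\sharp,y^\sharp)=\sup_{x\in\mathbb X,y\in\mathbb Y}\big(c(x,x^\sharp)\mathbin{\underset{\cdot}{+}} d(y,y^\sharp)\mathbin{\underset{\cdot}{+}}(-K(x,y))\big)$. *)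

theory Defs
  imports "HOL-Library.Extended_Real"
begin

definition lplus :: "ereal \<Rightarrow> ereal \<Rightarrow> ereal" (infixl "+\<^sub>l" 65) where
  "a +\<^sub>l b = (if (a = \<infinity> \<and> b = -\<infinity>) \<or> (a = -\<infinity> \<and> b = \<infinity>) then -\<infinity> else a + b)"

definition uplus :: "ereal \<Rightarrow> ereal \<Rightarrow> ereal" (infixl "+\<^sub>u" 65) where
  "a +\<^sub>u b = (if (a = \<infinity> \<and> b = -\<infinity>) \<or> (a = -\<infinity> \<and> b = \<infinity>) then \<infinity> else a + b)"

definition cconj :: "('x \<Rightarrow> 'xs \<Rightarrow> ereal) \<Rightarrow> ('x \<Rightarrow> ereal) \<Rightarrow> 'xs \<Rightarrow> ereal" where
  "cconj c h xs = (SUP x. c x xs +\<^sub>l (- h x))"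

definition cdconj :: "('x \<Rightarrow> 'xs \<Rightarrow> ereal) \<Rightarrow> ('y \<Rightarrow> 'ys \<Rightarrow> ereal) \<Rightarrow> ('x \<Rightarrow> 'y \<Rightarrow> ereal)
    \<Rightarrow> 'xs \<Rightarrow> 'ys \<Rightarrow> ereal" where
  "cdconj c d K xs ys = (SUP p. c (fst p) xs +\<^sub>l d (snd p) ys +\<^sub>l (- K (fst p) (snd p)))"

end

theory Submission
  imports Defs
begin

lemma lplus_comm: "a +\<^sub>l b = b +\<^sub>l a"
  unfolding lplus_def by (auto simp: add.commute)
lemma lplus_assoc: "(a +\<^sub>l b) +\<^sub>l c = a +\<^sub>l (b +\<^sub>l c)"
  unfolding lplus_def by (cases a; cases b; cases c) auto
lemma neg_uplus: "- (a +\<^sub>u b) = (-a) +\<^sub>l (-b)"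
  unfolding lplus_def uplus_def by (cases a; cases b) auto
lemma neg_INF: "- (INF y. h y) = (SUP y. - h y :: ereal)"
  using ereal_INF_uminus_eq[of "\<lambda>y. - h y" UNIV] by simp

lemma SUP_pair: "(SUP p. F (fst p) (snd p)) = (SUP x. SUP y. F x y :: 'z::complete_lattice)"
proof (rule antisym)
  show "(SUP p. F (fst p) (snd p)) \<le> (SUP x. SUP y. F x y)"
  proof (rule SUP_least)
    fix p :: "'a \<times> 'b"
    have "F (fst p) (snd p) \<le> (SUP y. F (fst p) y)" by (rule SUP_upper) simp
    also have "\<dots> \<le> (SUP x. SUP y. F x y)" by (rule SUP_upper) simp
    finally show "F (fst p) (snd p) \<le> (SUP x. SUP y. F x y)" .
  qed
  show "(SUP x. SUP y. F x y) \<le> (SUP p. F (fst p) (snd p))"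
  proof (intro SUP_least)
    fix x y
    show "F x y \<le> (SUP p. F (fst p) (snd p))" using SUP_upper[of "(x,y)" UNIV "\<lambda>p. F (fst p) (snd p)"] by simp
  qed
qed

lemma lplus_swap: "d +\<^sub>l (c +\<^sub>l k) = c +\<^sub>l d +\<^sub>l k"
  unfolding lplus_def by (cases c; cases d; cases k) auto

lemma lplus_SUP: "a +\<^sub>l (SUP i. F i) = (SUP i. a +\<^sub>l F i)"
proof (cases a)
  case (real r)
  have "a +\<^sub>l (SUP i. F i) = (SUP i. F i) + a" using real by (simp add: lplus_def add.commute)
  also have "\<dots> = (SUP i. F i + a)" using real by (subst SUP_ereal_add_left) auto
  also have "\<dots> = (SUP i. a +\<^sub>l F i)" using real by (simp add: lplus_def add.commute)
  finally show ?thesis .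
next
  case PInf
  show ?thesis
  proof (cases "(SUP i. F i) = -\<infinity>")
    case True
    then have "\<And>i. F i = -\<infinity>" by (simp add: SUP_eq_iff)
    then show ?thesis using PInf True by (simp add: lplus_def)
  next
    case False
    then obtain i where "F i \<noteq> -\<infinity>" by (metis SUP_bot_conv(2) bot_ereal_def)
    then have "a +\<^sub>l F i = \<infinity>" using PInf by (simp add: lplus_def)
    then have "(SUP i. a +\<^sub>l F i) = \<infinity>" by (metis UNIV_I SUP_upper top.extremum_uniqueI top_ereal_def)
    then show ?thesis using PInf False by (simp add: lplus_def)
  qed
next
  case MInf
  have "\<And>x. a +\<^sub>l x = -\<infinity>" using MInf by (simp add: lplus_def)
  then show ?thesis by simp
qed

theorem corollary2:
  fixes c :: "'x \<Rightarrow> 'xs \<Rightarrow> ereal" and d :: "'y \<Rightarrow> 'ys \<Rightarrow> ereal"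
    and K :: "'x \<Rightarrow> 'y \<Rightarrow> ereal" and f :: "'x \<Rightarrow> ereal" and g :: "'y \<Rightarrow> ereal"
    and Kx :: "'xs \<Rightarrow> 'y \<Rightarrow> ereal"
  assumes Kx_def: "\<And>xs y. Kx xs y = - cconj c (\<lambda>x. K x y) xs"
    and dual: "\<And>xs. (SUP y. (- Kx xs y) +\<^sub>l (- g y))
              = (INF ys. cconj d (Kx xs) ys +\<^sub>u cconj (\<lambda>y ys. - d y ys) g ys)"
    and f_def: "\<And>x. f x = (INF y. K x y +\<^sub>u g y)"
  shows "\<And>xs. cconj c f xs = (INF ys. cdconj c d K xs ys +\<^sub>u cconj (\<lambda>y ys. - d y ys) g ys)"
proof -
  fix xs
  have SUPl: "(SUP i. F i) +\<^sub>l a = (SUP i. F i +\<^sub>l a)" for F :: "'q \<Rightarrow> ereal" and a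
    using lplus_SUP[of a F] by (simp add: lplus_comm)
  have nK: "- Kx xs y = (SUP x. c x xs +\<^sub>l (- K x y))" for y
    by (simp add: Kx_def cconj_def)
  have "cconj c f xs = (SUP x. c x xs +\<^sub>l (SUP y. (- K x y) +\<^sub>l (- g y)))"
    unfolding cconj_def f_def by (simp add: neg_INF neg_uplus)
  also have "\<dots> = (SUP x. SUP y. c x xs +\<^sub>l (- K x y) +\<^sub>l (- g y))"
    by (simp add: lplus_SUP lplus_assoc)
  also have "\<dots> = (SUP y. SUP x. c x xs +\<^sub>l (- K x y) +\<^sub>l (- g y))"
    by (rule SUP_commute)
  also have "\<dots> = (SUP y. (- Kx xs y) +\<^sub>l (- g y))"
    by (simp add: nK SUPl)
  also have "\<dots> = (INF ys. cconj d (Kx xs) ys +\<^sub>u cconj (\<lambda>y ys. - d y ys) g ys)"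
    by (rule dual)
  also have "\<dots> = (INF ys. cdconj c d K xs ys +\<^sub>u cconj (\<lambda>y ys. - d y ys) g ys)"
  proof -
    have "cconj d (Kx xs) ys = cdconj c d K xs ys" for ys
    proof -
      have "cconj d (Kx xs) ys = (SUP y. SUP x. d y ys +\<^sub>l (c x xs +\<^sub>l (- K x y)))"
        by (simp add: cconj_def nK lplus_SUP)
      also have "\<dots> = (SUP y. SUP x. c x xs +\<^sub>l d y ys +\<^sub>l (- K x y))"
        by (simp only: lplus_swap)
      also have "\<dots> = (SUP x. SUP y. c x xs +\<^sub>l d y ys +\<^sub>l (- K x y))"
        by (rule SUP_commute)
      also have "\<dots> = cdconj c d K xs ys"
        unfolding cdconj_def by (rule SUP_pair[symmetric])
      finally show ?thesis .
    qed
    then show ?thesis by simp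
  qed
  finally show "cconj c f xs = (INF ys. cdconj c d K xs ys +\<^sub>u cconj (\<lambda>y ys. - d y ys) g ys)" .
qed

end
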